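(* Let $Z\sim N(0,1)$ and let $X=aZ^2+bZ+c$, where $a,b,c\in\mathbb{R}$. Let $(\alpha,\beta)\subseteq\mathbb{R}$ denote the range of the quadratic $x\mapsto ax^2+bx+c$, and let $f$ be twice differentiable on $(\alpha,\beta)$. Suppose further that $\mathbb{E}|Xf^{(k)}(X)|<\infty$ and $\mathbb{E}|f^{(k)}(X)|<\infty$ for all $k=0,1,2$. Then $$\mathbb{E}\big[(ab^2+4a^2(X-c))f''(X)+(2a^2-b^2-4a(X-c))f'(X)+(X-c-a)f(X)\big]=0.$$
   Context: $f^{(0)}\equiv f$, and $f^{(k)}$ denotes the $k$-th derivative of $f$. *)

theory Defs
  imports "HOL-Probability.Probability"
begin

definition twice_differentiable_on :: "(real \<Rightarrow> real) \<Rightarrow> real set \<Rightarrow> bool" where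
  "twice_differentiable_on f S \<longleftrightarrow>
     (\<forall>x\<in>S. f differentiable (at x) \<and> deriv f differentiable (at x))"

end

theory Submission
  imports Defs
begin

lemma ftc_lb:
  fixes Psi g :: "real \<Rightarrow> real"
  assumes "u \<le> v" "\<And>z. z \<in> {u..v} \<Longrightarrow> (Psi has_real_derivative g z) (at z)"
    "set_integrable lborel {u..v} g"
  shows "(LBINT z:{u..v}. g z) = Psi v - Psi u"
proof -
  have "(g has_integral Psi v - Psi u) {u..v}"
    by (rule fundamental_theorem_of_calculus)
      (use assms in \<open>auto simp: has_real_derivative_iff_has_vector_derivative[symmetric] intro: has_field_derivative_at_within\<close>)
  then show ?thesis using set_borel_integral_eq_integral(2)[OF assms(3)] by (simp add: integral_unique)
qed

lemma set_integral_abs_mono_subset: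
  fixes Psi :: "real \<Rightarrow> real"
  assumes "set_integrable lborel B Psi" "A \<subseteq> B" "A \<in> sets lborel"
  shows "(LBINT z:A. \<bar>Psi z\<bar>) \<le> (LBINT z:B. \<bar>Psi z\<bar>)"
proof -
  have iB: "set_integrable lborel B (\<lambda>z. \<bar>Psi z\<bar>)" using assms(1) by (simp add: set_integrable_abs)
  have iA: "set_integrable lborel A (\<lambda>z. \<bar>Psi z\<bar>)" using set_integrable_subset[OF iB assms(3) assms(2)] .
  show ?thesis unfolding set_lebesgue_integral_def
    apply (rule integral_mono)
    using iA iB assms(2) by (auto simp: set_integrable_def split: split_indicator)
qed

lemma tendsto_top_integrable_zero:
  fixes Psi :: "real \<Rightarrow> real"
  assumes lim: "(Psi \<longlongrightarrow> R) at_top" and int: "set_integrable lborel {s..} Psi"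
  shows "R = 0"
proof (rule ccontr)
  assume R: "R \<noteq> 0"
  have "((\<lambda>v. \<bar>Psi v\<bar>) \<longlongrightarrow> \<bar>R\<bar>) at_top" using lim by (rule tendsto_rabs)
  from order_tendstoD(1)[OF this, of "\<bar>R\<bar>/2"] R
  obtain T where T: "\<And>v. v \<ge> T \<Longrightarrow> \<bar>R\<bar>/2 < \<bar>Psi v\<bar>" by (auto simp: eventually_at_top_linorder)
  define T' where "T' = max T s"
  define C where "C = (LBINT z:{s..}. \<bar>Psi z\<bar>)"
  have C0: "C \<ge> 0" unfolding C_def set_lebesgue_integral_def by (rule integral_nonneg_AE) (auto simp: indicator_def)
  define N where "N = 2 * C / \<bar>R\<bar> + 1"
  have N0: "N > 0" using C0 R by (simp add: N_def add_nonneg_pos)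
  have sub: "{T'..T'+N} \<subseteq> {s..}" by (auto simp: T'_def)
  have iA: "set_integrable lborel {T'..T'+N} (\<lambda>z. \<bar>Psi z\<bar>)"
    using set_integrable_subset[OF set_integrable_abs[OF int] _ sub] by simp
  have "\<bar>R\<bar>/2 * N = integral {T'..T'+N} (\<lambda>_. \<bar>R\<bar>/2)" using N0 by simp
  also have "\<dots> \<le> integral {T'..T'+N} (\<lambda>z. \<bar>Psi z\<bar>)"
    apply (rule integral_le)
    using set_borel_integral_eq_integral(1)[OF iA] T by (auto simp: T'_def less_imp_le)
  also have "\<dots> = (LBINT z:{T'..T'+N}. \<bar>Psi z\<bar>)" using set_borel_integral_eq_integral(2)[OF iA] by simp
  also have "\<dots> \<le> C" unfolding C_def by (rule set_integral_abs_mono_subset[OF int sub]) auto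
  finally have "\<bar>R\<bar>/2 * N \<le> C" .
  moreover have "\<bar>R\<bar>/2 * N = C + \<bar>R\<bar>/2" using R by (simp add: N_def field_simps)
  ultimately show False using R by simp
qed

lemma half_right:
  fixes Psi g :: "real \<Rightarrow> real"
  assumes der: "\<And>z. z > p \<Longrightarrow> (Psi has_real_derivative g z) (at z)"
    and ig: "set_integrable lborel {p<..} g" and iP: "set_integrable lborel {p<..} Psi"
  shows "\<exists>L. (Psi \<longlongrightarrow> L) (at_right p) \<and> (LBINT z:{p<..}. g z) = - L"
proof -
  define s where "s = p + 1"
  have ftc: "(LBINT z:{u..v}. g z) = Psi v - Psi u" if "p < u" "u \<le> v" for u v
    by (rule ftc_lb) (use that in \<open>auto intro!: der set_integrable_subset[OF ig]\<close>)
  have top: "((\<lambda>v. LBINT z:{s..v}. g z) \<longlongrightarrow> (LBINT z:{s..}. g z)) at_top"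
    by (rule tendsto_set_lebesgue_integral_at_top) (auto intro: set_integrable_subset[OF ig] simp: s_def)
  have "((\<lambda>v. Psi s + (LBINT z:{s..v}. g z)) \<longlongrightarrow> Psi s + (LBINT z:{s..}. g z)) at_top"
    by (intro tendsto_intros top)
  moreover have "eventually (\<lambda>v. Psi s + (LBINT z:{s..v}. g z) = Psi v) at_top"
    using eventually_ge_at_top[of s] by eventually_elim (simp add: ftc s_def)
  ultimately have "(Psi \<longlongrightarrow> Psi s + (LBINT z:{s..}. g z)) at_top"
    by (auto dest: tendsto_cong[THEN iffD1, rotated])
  then have R0: "Psi s + (LBINT z:{s..}. g z) = 0"
    by (rule tendsto_top_integrable_zero[where s=s]) (rule set_integrable_subset[OF iP], auto simp: s_def)
  have right: "((\<lambda>u. LBINT z:{u..s}. g z) \<longlongrightarrow> (LBINT z:{p<..s}. g z)) (at_right p)"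
    by (rule tendsto_set_lebesgue_integral_at_right) (auto simp: s_def intro: set_integrable_subset[OF ig])
  then have "((\<lambda>u. Psi s - (LBINT z:{u..s}. g z)) \<longlongrightarrow> Psi s - (LBINT z:{p<..s}. g z)) (at_right p)"
    by (intro tendsto_intros)
  moreover have "eventually (\<lambda>u. Psi s - (LBINT z:{u..s}. g z) = Psi u) (at_right p)"
    unfolding eventually_at_right[OF less_add_one[of p]]
    apply (rule exI[of _ s]) 
    apply (simp add: s_def)
    apply (intro allI impI)
    apply (subst ftc)
    by (auto simp: s_def)
  ultimately have L: "(Psi \<longlongrightarrow> Psi s - (LBINT z:{p<..s}. g z)) (at_right p)"
    by (auto dest: tendsto_cong[THEN iffD1, rotated])
  have e: "{p<..} = {p<..s} \<union> {s..}" by (auto simp: s_def)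
  have "(LBINT z:{p<..}. g z) = (LBINT z:{p<..s}. g z) + (LBINT z:{s..}. g z)"
    unfolding e
    apply (rule set_integral_Un_AE)
    apply (rule AE_mp[OF AE_lborel_singleton[of s]], simp)
    by (auto intro: set_integrable_subset[OF ig] simp: s_def)
  then show ?thesis using L R0 by (intro exI[of _ "Psi s - (LBINT z:{p<..s}. g z)"]) simp
qed

lemma tendsto_bot_integrable_zero:
  fixes Psi :: "real \<Rightarrow> real"
  assumes lim: "(Psi \<longlongrightarrow> R) at_bot" and int: "set_integrable lborel {..s} Psi"
  shows "R = 0"
proof (rule ccontr)
  assume R: "R \<noteq> 0"
  have "((\<lambda>v. \<bar>Psi v\<bar>) \<longlongrightarrow> \<bar>R\<bar>) at_bot" using lim by (rule tendsto_rabs)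
  from order_tendstoD(1)[OF this, of "\<bar>R\<bar>/2"] R
  obtain T where T: "\<And>v. v \<le> T \<Longrightarrow> \<bar>R\<bar>/2 < \<bar>Psi v\<bar>" by (auto simp: eventually_at_bot_linorder)
  define T' where "T' = min T s"
  define C where "C = (LBINT z:{..s}. \<bar>Psi z\<bar>)"
  have C0: "C \<ge> 0" unfolding C_def set_lebesgue_integral_def by (rule integral_nonneg_AE) (auto simp: indicator_def)
  define N where "N = 2 * C / \<bar>R\<bar> + 1"
  have N0: "N > 0" using C0 R by (simp add: N_def add_nonneg_pos)
  have sub: "{T'-N..T'} \<subseteq> {..s}" by (auto simp: T'_def)
  have iA: "set_integrable lborel {T'-N..T'} (\<lambda>z. \<bar>Psi z\<bar>)"
    using set_integrable_subset[OF set_integrable_abs[OF int] _ sub] by simp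
  have "\<bar>R\<bar>/2 * N = integral {T'-N..T'} (\<lambda>_. \<bar>R\<bar>/2)" using N0 by simp
  also have "\<dots> \<le> integral {T'-N..T'} (\<lambda>z. \<bar>Psi z\<bar>)"
    apply (rule integral_le)
    using set_borel_integral_eq_integral(1)[OF iA] T by (auto simp: T'_def less_imp_le)
  also have "\<dots> = (LBINT z:{T'-N..T'}. \<bar>Psi z\<bar>)" using set_borel_integral_eq_integral(2)[OF iA] by simp
  also have "\<dots> \<le> C" unfolding C_def by (rule set_integral_abs_mono_subset[OF int sub]) auto
  finally have "\<bar>R\<bar>/2 * N \<le> C" .
  moreover have "\<bar>R\<bar>/2 * N = C + \<bar>R\<bar>/2" using R by (simp add: N_def field_simps)
  ultimately show False using R by simp
qed

lemma half_left:
  fixes Psi g :: "real \<Rightarrow> real"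
  assumes der: "\<And>z. z < p \<Longrightarrow> (Psi has_real_derivative g z) (at z)"
    and ig: "set_integrable lborel {..<p} g" and iP: "set_integrable lborel {..<p} Psi"
  shows "\<exists>L. (Psi \<longlongrightarrow> L) (at_left p) \<and> (LBINT z:{..<p}. g z) = L"
proof -
  define s where "s = p - 1"
  have pm: "p - 1 < p" by simp
  have ftc: "(LBINT z:{u..v}. g z) = Psi v - Psi u" if "v < p" "u \<le> v" for u v
    by (rule ftc_lb) (use that in \<open>auto intro!: der set_integrable_subset[OF ig]\<close>)
  have bot: "((\<lambda>u. LBINT z:{u..s}. g z) \<longlongrightarrow> (LBINT z:{..s}. g z)) at_bot"
    by (rule tendsto_set_lebesgue_integral_at_bot) (auto intro: set_integrable_subset[OF ig] simp: s_def)
  have "((\<lambda>u. Psi s - (LBINT z:{u..s}. g z)) \<longlongrightarrow> Psi s - (LBINT z:{..s}. g z)) at_bot"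
    by (intro tendsto_intros bot)
  moreover have "eventually (\<lambda>u. Psi s - (LBINT z:{u..s}. g z) = Psi u) at_bot"
    using eventually_le_at_bot[of s] by eventually_elim (simp add: ftc s_def)
  ultimately have "(Psi \<longlongrightarrow> Psi s - (LBINT z:{..s}. g z)) at_bot"
    by (auto dest: tendsto_cong[THEN iffD1, rotated])
  then have R0: "Psi s - (LBINT z:{..s}. g z) = 0"
    by (rule tendsto_bot_integrable_zero[where s=s]) (rule set_integrable_subset[OF iP], auto simp: s_def)
  have left: "((\<lambda>v. LBINT z:{s..v}. g z) \<longlongrightarrow> (LBINT z:{s..<p}. g z)) (at_left p)"
    by (rule tendsto_set_lebesgue_integral_at_left) (auto simp: s_def intro: set_integrable_subset[OF ig])
  then have "((\<lambda>v. Psi s + (LBINT z:{s..v}. g z)) \<longlongrightarrow> Psi s + (LBINT z:{s..<p}. g z)) (at_left p)"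
    by (intro tendsto_intros)
  moreover have "eventually (\<lambda>v. Psi s + (LBINT z:{s..v}. g z) = Psi v) (at_left p)"
    unfolding eventually_at_left[OF pm]
    apply (rule exI[of _ s]) 
    apply (simp add: s_def)
    apply (intro allI impI)
    apply (subst ftc)
    by (auto simp: s_def)
  ultimately have L: "(Psi \<longlongrightarrow> Psi s + (LBINT z:{s..<p}. g z)) (at_left p)"
    by (auto dest: tendsto_cong[THEN iffD1, rotated])
  have e: "{..<p} = {..s} \<union> {s..<p}" by (auto simp: s_def)
  have "(LBINT z:{..<p}. g z) = (LBINT z:{..s}. g z) + (LBINT z:{s..<p}. g z)"
    unfolding e
    apply (rule set_integral_Un_AE)
    apply (rule AE_mp[OF AE_lborel_singleton[of s]], simp)
    by (auto intro: set_integrable_subset[OF ig] simp: s_def)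
  then show ?thesis using L R0 by (intro exI[of _ "Psi s + (LBINT z:{s..<p}. g z)"]) simp
qed

abbreviation phi where "phi \<equiv> std_normal_density"

lemma phi_deriv: "(phi has_real_derivative (- z * phi z)) (at z)"
proof -
  have e: "phi = (\<lambda>x. (1 / sqrt (2 * pi)) * exp (- x\<^sup>2 / 2))" by (rule ext) (simp add: std_normal_density_def)
  have s2: "sqrt (2 * pi) * sqrt (2 * pi) = 2 * pi" by simp
  show ?thesis unfolding e
    apply (auto intro!: derivative_eq_intros)
    apply (subst (2) s2[symmetric])
    by (simp add: field_simps)
qed

lemma phi_pos: "phi z > 0" by (simp add: normal_density_pos)

lemma phi_tendsto: "(phi \<longlongrightarrow> phi p) (at p within S)"
  using DERIV_isCont[OF phi_deriv[of p]] continuous_at_imp_continuous_at_within continuous_within by blast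

lemma stein_gen:
  fixes h h' :: "real \<Rightarrow> real" and p :: real
  assumes der: "\<And>z. z \<noteq> p \<Longrightarrow> (h has_real_derivative h' z) (at z)"
    and i1: "integrable lborel (\<lambda>z. phi z * h z)"
    and i2: "integrable lborel (\<lambda>z. phi z * (z * h z))"
    and i3: "integrable lborel (\<lambda>z. phi z * h' z)"
    and bd: "\<And>L1 L2. (h \<longlongrightarrow> L1) (at_left p) \<Longrightarrow> (h \<longlongrightarrow> L2) (at_right p) \<Longrightarrow> L1 = L2"
  shows "(\<integral>z. phi z * (z * h z) \<partial>lborel) = (\<integral>z. phi z * h' z \<partial>lborel)"
proof -
  define Psi where "Psi z = h z * phi z" for z
  define g where "g z = phi z * h' z - phi z * (z * h z)" for z
  have dP: "(Psi has_real_derivative g z) (at z)" if "z \<noteq> p" for z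
    unfolding Psi_def
    by (rule DERIV_cong[OF DERIV_mult[OF der[OF that] phi_deriv]]) (simp add: g_def algebra_simps)
  have ig: "integrable lborel g" unfolding g_def by (rule Bochner_Integration.integrable_diff[OF i3 i2])
  have iP: "integrable lborel Psi" unfolding Psi_def by (subst mult.commute) (rule i1)
  have si: "set_integrable lborel A g" "set_integrable lborel A Psi" if "A \<in> sets lborel" for A
    unfolding set_integrable_def by (rule integrable_mult_indicator[OF that ig], rule integrable_mult_indicator[OF that iP])
  obtain L2 where L2: "(Psi \<longlongrightarrow> L2) (at_right p)" "(LBINT z:{p<..}. g z) = - L2"
    using half_right[of p Psi g] dP si by force
  obtain L1 where L1: "(Psi \<longlongrightarrow> L1) (at_left p)" "(LBINT z:{..<p}. g z) = L1"
    using half_left[of p Psi g] dP si by force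
  have pn: "\<And>z. phi z \<noteq> 0" using phi_pos by (metis less_irrefl)
  have hP: "h = (\<lambda>z. Psi z / phi z)" by (simp add: Psi_def fun_eq_iff pn)
  have "(h \<longlongrightarrow> L1 / phi p) (at_left p)" unfolding hP
    by (intro tendsto_divide L1 phi_tendsto) (simp add: pn)
  moreover have "(h \<longlongrightarrow> L2 / phi p) (at_right p)" unfolding hP
    by (intro tendsto_divide L2 phi_tendsto) (simp add: pn)
  ultimately have "L1 / phi p = L2 / phi p" by (rule bd)
  then have L12: "L1 = L2" using phi_pos[of p] by simp
  have "(\<integral>z. g z \<partial>lborel) = (LBINT z:({..<p} \<union> {p<..}). g z)"
    unfolding set_lebesgue_integral_def
    apply (rule integral_cong_AE)
    using ig apply simp
    using si(1)[of "{..<p} \<union> {p<..}"] apply (simp add: set_integrable_def)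
    apply (rule AE_mp[OF AE_lborel_singleton[of p]])
    apply (rule AE_I2)
    by (auto simp: indicator_def)
  also have "\<dots> = (LBINT z:{..<p}. g z) + (LBINT z:{p<..}. g z)"
    apply (rule set_integral_Un_AE)
    apply (rule AE_I2, simp)
    by (simp_all add: si)
  finally have "(\<integral>z. g z \<partial>lborel) = 0" using L1(2) L2(2) L12 by simp
  moreover have "(\<integral>z. g z \<partial>lborel) = (\<integral>z. phi z * h' z \<partial>lborel) - (\<integral>z. phi z * (z * h z) \<partial>lborel)"
    unfolding g_def by (rule Bochner_Integration.integral_diff[OF i3 i2])
  ultimately show ?thesis by simp
qed

lemma inv_lim_zero:
  fixes u :: "real \<Rightarrow> real"
  assumes lim: "((\<lambda>z. (z - p) * u z) \<longlongrightarrow> l) (at_right p)" and iu: "integrable lborel u"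
  shows "l = 0"
proof (rule ccontr)
  assume l: "l \<noteq> 0"
  have "((\<lambda>z. \<bar>(z - p) * u z\<bar>) \<longlongrightarrow> \<bar>l\<bar>) (at_right p)" using lim by (rule tendsto_rabs)
  from order_tendstoD(1)[OF this, of "\<bar>l\<bar>/2"] l
  have "eventually (\<lambda>z. \<bar>l\<bar>/2 < \<bar>(z - p) * u z\<bar>) (at_right p)" by simp
  then obtain b where b: "b > p" and bb: "\<And>z. p < z \<Longrightarrow> z < b \<Longrightarrow> \<bar>l\<bar>/2 < \<bar>(z - p) * u z\<bar>"
    unfolding eventually_at_right[OF less_add_one[of p]] by blast
  define e where "e = (b - p) / 2"
  have e0: "e > 0" using b by (simp add: e_def)
  define C where "C = (\<integral>z. \<bar>u z\<bar> \<partial>lborel)"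
  have C0: "C \<ge> 0" unfolding C_def by simp
  define eps where "eps = e * exp (- (2 * C / \<bar>l\<bar>) - 1)"
  have eps0: "eps > 0" using e0 by (simp add: eps_def)
  have "2 * C / \<bar>l\<bar> \<ge> 0" using C0 by simp
  then have "- (2 * C / \<bar>l\<bar>) - 1 < 0" by linarith
  then have "exp (- (2 * C / \<bar>l\<bar>) - 1) < 1" by simp
  then have epse: "eps < e" using e0 by (simp add: eps_def)
  have lneps: "ln eps = ln e - (2 * C / \<bar>l\<bar>) - 1" using e0 by (simp add: eps_def ln_mult)
  have bound: "\<bar>l\<bar>/2 * (1 / (z - p)) \<le> \<bar>u z\<bar>" if "z \<in> {p+eps..p+e}" for z
  proof -
    have zp: "z - p > 0" using that eps0 by auto
    have zb: "z < b" using that b by (auto simp: e_def field_simps)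
    have "\<bar>l\<bar>/2 < \<bar>z - p\<bar> * \<bar>u z\<bar>" using bb[OF _ zb] zp by (simp add: abs_mult)
    then have "\<bar>l\<bar>/2 < (z - p) * \<bar>u z\<bar>" using zp by simp
    then show ?thesis using zp by (simp add: field_simps)
  qed
  have ftc: "((\<lambda>z. \<bar>l\<bar>/2 * (1 / (z - p))) has_integral (\<bar>l\<bar>/2 * ln ((p+e) - p) - \<bar>l\<bar>/2 * ln ((p+eps) - p))) {p+eps..p+e}"
  proof (rule fundamental_theorem_of_calculus)
    show "p + eps \<le> p + e" using epse by simp
    fix z assume z: "z \<in> {p+eps..p+e}"
    then have zp: "z - p > 0" using eps0 by auto
    show "((\<lambda>z. \<bar>l\<bar>/2 * ln (z - p)) has_vector_derivative \<bar>l\<bar>/2 * (1 / (z - p))) (at z within {p+eps..p+e})"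
      unfolding has_real_derivative_iff_has_vector_derivative[symmetric]
      using zp apply (auto intro!: derivative_eq_intros)
      apply (subgoal_tac "z * 4 - p * 4 \<noteq> 0" "2 * z - 2 * p \<noteq> 0")
      by (auto simp: field_simps)
  qed
  have iu': "set_integrable lborel {p+eps..p+e} (\<lambda>z. \<bar>u z\<bar>)"
    unfolding set_integrable_def using integrable_mult_indicator[OF _ integrable_abs[OF iu], of "{p+eps..p+e}"] by simp
  have "C + \<bar>l\<bar>/2 = \<bar>l\<bar>/2 * ln ((p+e) - p) - \<bar>l\<bar>/2 * ln ((p+eps) - p)"
    using lneps l by (simp add: field_simps)
  also have "\<dots> = integral {p+eps..p+e} (\<lambda>z. \<bar>l\<bar>/2 * (1 / (z - p)))" using ftc by (simp add: integral_unique)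
  also have "\<dots> \<le> integral {p+eps..p+e} (\<lambda>z. \<bar>u z\<bar>)"
    apply (rule integral_le)
    using ftc set_borel_integral_eq_integral(1)[OF iu'] bound by auto
  also have "\<dots> = (LBINT z:{p+eps..p+e}. \<bar>u z\<bar>)" using set_borel_integral_eq_integral(2)[OF iu'] by simp
  also have "\<dots> \<le> C" unfolding C_def set_lebesgue_integral_def
    apply (rule integral_mono)
    using iu' integrable_abs[OF iu] by (auto simp: set_integrable_def indicator_def)
  finally show False using l by simp
qed

lemma reflect_filter: "filterlim (\<lambda>z. 2 * p - z) (at_left p) (at_right (p::real))"
  unfolding filterlim_at
proof
  show "\<forall>\<^sub>F x in at_right p. 2 * p - x \<in> {..<p} \<and> 2 * p - x \<noteq> p"
    using eventually_at_right_less[of p] by eventually_elim auto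
  have "((\<lambda>z. 2 * p - z) \<longlongrightarrow> 2 * p - p) (at_right p)" by (intro tendsto_intros)
  then show "((\<lambda>z. 2 * p - z) \<longlongrightarrow> p) (at_right p)" by simp
qed

lemma reflect_tendsto:
  assumes "(h \<longlongrightarrow> L) (at_left p)"
  shows "((\<lambda>z. h (2 * p - z)) \<longlongrightarrow> L) (at_right (p::real))"
  using filterlim_compose[OF assms reflect_filter] .

lemma bd_cont:
  fixes h :: "real \<Rightarrow> real"
  assumes "isCont h p" "(h \<longlongrightarrow> L1) (at_left p)" "(h \<longlongrightarrow> L2) (at_right p)"
  shows "L1 = L2"
proof -
  have "(h \<longlongrightarrow> h p) (at_left p)" "(h \<longlongrightarrow> h p) (at_right p)"
    using assms(1) continuous_at_imp_continuous_at_within continuous_within by blast+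
  then show ?thesis using assms(2,3) tendsto_unique[OF trivial_limit_at_left_real] tendsto_unique[OF trivial_limit_at_right_real]
    by metis
qed

lemma bd_even:
  fixes h :: "real \<Rightarrow> real"
  assumes "\<And>z. h (2 * p - z) = h z" "(h \<longlongrightarrow> L1) (at_left p)" "(h \<longlongrightarrow> L2) (at_right p)"
  shows "L1 = L2"
proof -
  have "((\<lambda>z. h (2 * p - z)) \<longlongrightarrow> L1) (at_right p)" by (rule reflect_tendsto[OF assms(2)])
  then have "(h \<longlongrightarrow> L1) (at_right p)" using assms(1) by simp
  then show ?thesis using assms(3) tendsto_unique[OF trivial_limit_at_right_real] by blast
qed

lemma bd_odd:
  fixes h v :: "real \<Rightarrow> real"
  assumes hv: "\<And>z. h z = (z - p) * v z" and vs: "\<And>z. v (2 * p - z) = v z"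
    and iv: "integrable lborel (\<lambda>z. phi z * v z)"
    and L1: "(h \<longlongrightarrow> L1) (at_left p)" and L2: "(h \<longlongrightarrow> L2) (at_right p)"
  shows "L1 = L2"
proof -
  have "((\<lambda>z. h z * phi z) \<longlongrightarrow> L2 * phi p) (at_right p)" by (intro tendsto_intros L2 phi_tendsto)
  moreover have "(\<lambda>z. h z * phi z) = (\<lambda>z. (z - p) * (phi z * v z))" by (auto simp: hv fun_eq_iff)
  ultimately have "L2 * phi p = 0" using inv_lim_zero[OF _ iv] by metis
  then have L20: "L2 = 0" using phi_pos[of p] by simp
  have "((\<lambda>z. h (2 * p - z)) \<longlongrightarrow> L1) (at_right p)" by (rule reflect_tendsto[OF L1])
  moreover have "(\<lambda>z. h (2 * p - z)) = (\<lambda>z. - h z)" apply (simp add: hv vs fun_eq_iff) by (simp add: algebra_simps)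
  ultimately have "((\<lambda>z. - h z) \<longlongrightarrow> L1) (at_right p)" by simp
  then have "((\<lambda>z. - (- h z)) \<longlongrightarrow> - L1) (at_right p)" by (intro tendsto_intros)
  then have "(h \<longlongrightarrow> - L1) (at_right p)" by simp
  then have "- L1 = L2" using L2 tendsto_unique[OF trivial_limit_at_right_real] by blast
  then show ?thesis using L20 by simp
qed

lemma zb1: fixes a b z :: real assumes "a \<noteq> 0" shows "\<bar>b * z\<bar> \<le> \<bar>a\<bar> * z\<^sup>2 / 2 + b\<^sup>2 / (2 * \<bar>a\<bar>)"
proof -
  have "0 \<le> (\<bar>a\<bar>*\<bar>z\<bar> - \<bar>b\<bar>)\<^sup>2" by simp
  then have "2*\<bar>a\<bar>*\<bar>b * z\<bar> \<le> \<bar>a\<bar>\<^sup>2*z\<^sup>2 + b\<^sup>2"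
    by (simp add: power2_eq_square algebra_simps abs_mult)
  then show ?thesis using assms by (simp add: field_simps power2_eq_square)
qed
lemma zbound: fixes a b c z :: real assumes "a \<noteq> 0"
  shows "\<bar>z\<bar> \<le> (1 + 2 * \<bar>c\<bar> / \<bar>a\<bar> + b\<^sup>2 / \<bar>a\<bar>\<^sup>2 + 2 / \<bar>a\<bar>) * (1 + \<bar>a * z\<^sup>2 + b * z + c\<bar>)"
proof -
  have z2: "\<bar>a\<bar> * z\<^sup>2 \<le> \<bar>a * z\<^sup>2 + b * z + c\<bar> + \<bar>b * z\<bar> + \<bar>c\<bar>" by fastforce
  have z3: "\<bar>z\<bar> \<le> 1 + z\<^sup>2"
    by (smt (verit, best) abs_le_square_iff abs_minus_cancel one_le_numeral power_increasing power_one_right zero_le_power_eq_numeral)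
  define Q where "Q = \<bar>a * z\<^sup>2 + b * z + c\<bar>"
  have Q0: "Q \<ge> 0" by (simp add: Q_def)
  define A where "A = \<bar>a\<bar>"
  have A0: "A > 0" using assms by (simp add: A_def)
  have H: "A * z\<^sup>2 / 2 \<le> Q + \<bar>c\<bar> + b\<^sup>2 / (2 * A)" using z2 zb1[OF assms, of b z] by (simp add: Q_def A_def)
  have "z\<^sup>2 = (2/A) * (A * z\<^sup>2 / 2)" using A0 by simp
  also have "\<dots> \<le> (2/A) * (Q + \<bar>c\<bar> + b\<^sup>2 / (2 * A))" using H A0 by (intro mult_left_mono) auto
  also have "\<dots> = 2 * Q / A + 2 * \<bar>c\<bar> / A + b\<^sup>2 / A\<^sup>2" using A0 by (simp add: field_simps power2_eq_square)
  finally have "z\<^sup>2 \<le> 2 * Q / \<bar>a\<bar> + 2 * \<bar>c\<bar> / \<bar>a\<bar> + b\<^sup>2 / \<bar>a\<bar>\<^sup>2" by (simp add: A_def)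
  then have "\<bar>z\<bar> \<le> 1 + 2 * \<bar>c\<bar> / \<bar>a\<bar> + b\<^sup>2 / \<bar>a\<bar>\<^sup>2 + (2 / \<bar>a\<bar>) * Q" using z3 by simp
  also have "\<dots> \<le> (1 + 2 * \<bar>c\<bar> / \<bar>a\<bar> + b\<^sup>2 / \<bar>a\<bar>\<^sup>2 + 2 / \<bar>a\<bar>) * (1 + Q)"
  proof -
    have gen: "K0 + K1 * Q \<le> (K0 + K1) * (1 + Q)" if "K0 \<ge> 0" "K1 \<ge> 0" for K0 K1 :: real
      using that Q0 by (simp add: algebra_simps)
    show ?thesis by (rule gen) auto
  qed
  finally show ?thesis by (simp add: Q_def)
qed

lemma q_shift: fixes a b c x :: real assumes "a \<noteq> 0"
  shows "a*x\<^sup>2 + b*x + c = a*(x - (-b/(2*a)))\<^sup>2 + (c - b\<^sup>2/(4*a))"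
  using assms by (simp add: field_simps power2_eq_square)

lemma range_sub: fixes a b c y :: real assumes "a \<noteq> 0" "(y - (c - b\<^sup>2/(4*a))) / a \<ge> 0"
  shows "y \<in> range (\<lambda>x. a*x\<^sup>2 + b*x + c)"
proof -
  define x where "x = -b/(2*a) + sqrt ((y - (c - b\<^sup>2/(4*a)))/a)"
  have "a*x\<^sup>2 + b*x + c = a*(sqrt ((y - (c - b\<^sup>2/(4*a)))/a))\<^sup>2 + (c - b\<^sup>2/(4*a))"
    using q_shift[OF assms(1), where x=x and b=b and c=c] by (simp add: x_def)
  also have "\<dots> = y" using assms by simp
  finally have "y = (\<lambda>x. a*x\<^sup>2 + b*x + c) x" by simp
  then show ?thesis by (rule image_eqI) simp
qed

lemma geom:
  fixes a b c :: real and q :: "real \<Rightarrow> real"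
  assumes hq: "q = (\<lambda>x. a * x\<^sup>2 + b * x + c)" and ab: "a \<noteq> 0 \<or> b \<noteq> 0"
  shows "z \<noteq> (if a = 0 then 0 else -b/(2*a)) \<Longrightarrow> q z \<in> interior (range q)"
    and "a = 0 \<Longrightarrow> q z \<in> interior (range q)"
    and "t * (if a < 0 then -1 else 1) > 0 \<Longrightarrow> q z + t \<in> interior (range q)"
proof -
  define m where "m = c - b\<^sup>2/(4*a)"
  have z0: "a = 0 \<Longrightarrow> interior (range q) = UNIV"
  proof -
    assume a: "a = 0"
    then have b: "b \<noteq> 0" using ab by simp
    have "y \<in> range q" for y
      using b a by (auto simp: hq image_iff intro!: exI[of _ "(y - c) / b"])
    then have "range q = UNIV" by auto
    then show ?thesis by simp
  qed
  have pos: "{m<..} \<subseteq> interior (range q)" if a: "a > 0"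
  proof -
    have "{m..} \<subseteq> range q" using range_sub[where a=a and b=b and c=c] a by (auto simp: hq m_def)
    from interior_mono[OF this] show ?thesis by simp
  qed
  have neg: "{..<m} \<subseteq> interior (range q)" if a: "a < 0"
  proof -
    have "{..m} \<subseteq> range q" using range_sub[where a=a and b=b and c=c] a by (auto simp: hq m_def divide_nonpos_neg)
    from interior_mono[OF this] show ?thesis by simp
  qed
  have qs: "q z = a * (z - (-b/(2*a)))\<^sup>2 + m" if "a \<noteq> 0" for z
    using q_shift[OF that] by (simp add: hq m_def)
  show "q z \<in> interior (range q)" if "z \<noteq> (if a = 0 then 0 else -b/(2*a))"
  proof (cases "a = 0")
    case True then show ?thesis using z0 by simp
  next
    case False
    then have "(z - (-b/(2*a)))\<^sup>2 > 0" using that by simp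
    then show ?thesis
    proof (cases "a > 0")
      case True
      then have "q z > m" using qs False \<open>(z - (-b/(2*a)))\<^sup>2 > 0\<close> by simp
      then show ?thesis using pos True by auto
    next
      case False2: False
      then have "a < 0" using False by simp
      then have "q z < m" using qs False \<open>(z - (-b/(2*a)))\<^sup>2 > 0\<close> by (simp add: mult_neg_pos)
      then show ?thesis using neg \<open>a < 0\<close> by auto
    qed
  qed
  show "a = 0 \<Longrightarrow> q z \<in> interior (range q)" using z0 by simp
  show "q z + t \<in> interior (range q)" if t: "t * (if a < 0 then -1 else 1) > 0"
  proof (cases "a = 0")
    case True then show ?thesis using z0 by simp
  next
    case False
    show ?thesis
    proof (cases "a > 0")
      case True
      then have "q z \<ge> m" using qs False by simp
      moreover have "t > 0" using t True by simp
      ultimately show ?thesis using pos True by auto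
    next
      case False2: False
      then have a: "a < 0" using False by simp
      then have "q z \<le> m" using qs False by (simp add: mult_nonpos_nonneg)
      moreover have "t < 0" using t a by simp
      ultimately show ?thesis using neg a by auto
    qed
  qed
qed

lemma meas_F:
  fixes a b c :: real and f q :: "real \<Rightarrow> real"
  assumes hq: "q = (\<lambda>x. a * x\<^sup>2 + b * x + c)" and ab: "a \<noteq> 0 \<or> b \<noteq> 0"
    and tw: "twice_differentiable_on f (interior (range q))"
  shows "(\<lambda>z. f (q z)) \<in> borel_measurable borel"
    and "(\<lambda>z. deriv f (q z)) \<in> borel_measurable borel"
    and "(\<lambda>z. deriv (deriv f) (q z)) \<in> borel_measurable borel"
proof -
  define p where "p = (if a = 0 then 0 else -b/(2*a))"
  define s :: real where "s = (if a < 0 then -1 else 1)"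
  have s0: "s \<noteq> 0" by (simp add: s_def)
  have inU: "q z \<in> interior (range q)" if "z \<noteq> p" for z using geom(1)[OF hq ab] that by (simp add: p_def)
  have inU2: "q z + t \<in> interior (range q)" if "t * s > 0" for z t using geom(3)[OF hq ab] that by (simp add: s_def)
  have df: "(f has_real_derivative deriv f y) (at y)" if "y \<in> interior (range q)" for y
    using tw that unfolding twice_differentiable_on_def by (simp add: DERIV_deriv_iff_real_differentiable)
  have ddf: "(deriv f has_real_derivative deriv (deriv f) y) (at y)" if "y \<in> interior (range q)" for y
    using tw that unfolding twice_differentiable_on_def by (simp add: DERIV_deriv_iff_real_differentiable)
  have dq: "(q has_real_derivative 2*a*z + b) (at z)" for z unfolding hq by (auto intro!: derivative_eq_intros)
  have cq: "isCont q z" for z using DERIV_isCont[OF dq] .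
  show m0: "(\<lambda>z. f (q z)) \<in> borel_measurable borel"
    apply (rule borel_measurable_continuous_countable_exceptions[of "{p}"])
    apply simp
    apply (rule continuous_at_imp_continuous_on)
    apply (intro ballI)
    subgoal for z by (rule isCont_o2[OF cq DERIV_isCont[OF df[OF inU]]]) simp
    done
  show m1: "(\<lambda>z. deriv f (q z)) \<in> borel_measurable borel"
    apply (rule borel_measurable_continuous_countable_exceptions[of "{p}"])
    apply simp
    apply (rule continuous_at_imp_continuous_on)
    apply (intro ballI)
    subgoal for z by (rule isCont_o2[OF cq DERIV_isCont[OF ddf[OF inU]]]) simp
    done
  define t where "t k = s * inverse (real (Suc k))" for k
  have ts: "t k * s > 0" for k by (simp add: t_def s_def)
  have t0: "t k \<noteq> 0" for k using s0 by (simp add: t_def)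
  define D where "D k z = (deriv f (q z + t k) - deriv f (q z)) / t k" for k z
  have mt: "(\<lambda>z. deriv f (q z + t k)) \<in> borel_measurable borel" for k
  proof (rule borel_measurable_continuous_onI, rule continuous_at_imp_continuous_on, intro ballI)
    fix z
    have c1: "isCont (\<lambda>z. q z + t k) z" using cq by (intro continuous_intros) auto
    have c2: "isCont (deriv f) (q z + t k)" by (rule DERIV_isCont[OF ddf[OF inU2[OF ts]]])
    show "isCont (\<lambda>z. deriv f (q z + t k)) z"
      using isCont_o2[OF c1 c2] by simp
  qed
  have mD[measurable]: "D k \<in> borel_measurable borel" for k
    unfolding D_def[abs_def] by (intro borel_measurable_divide borel_measurable_diff mt m1 borel_measurable_const)
  have tl: "filterlim t (at 0) sequentially"
    unfolding filterlim_at
  proof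
    show "\<forall>\<^sub>F k in sequentially. t k \<in> UNIV \<and> t k \<noteq> 0" using t0 by simp
    have "(\<lambda>k. s * inverse (real (Suc k))) \<longlonglongrightarrow> s * 0"
      by (intro tendsto_mult tendsto_const LIMSEQ_inverse_real_of_nat)
    then show "t \<longlonglongrightarrow> 0" by (simp add: t_def[abs_def])
  qed
  have conv: "(\<lambda>k. D k z) \<longlonglongrightarrow> deriv (deriv f) (q z)" if "z \<noteq> p" for z
  proof -
    have "((\<lambda>h. (deriv f (q z + h) - deriv f (q z)) / h) \<longlongrightarrow> deriv (deriv f) (q z)) (at 0)"
      using ddf[OF inU[OF that]] unfolding DERIV_def .
    from filterlim_compose[OF this tl] show ?thesis by (simp add: D_def)
  qed
  define u where "u k z = (if z = p then deriv (deriv f) (q p) else D k z)" for k z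
  have mu: "u k \<in> borel_measurable borel" for k
    unfolding u_def[abs_def] by measurable
  show "(\<lambda>z. deriv (deriv f) (q z)) \<in> borel_measurable borel"
  proof (rule borel_measurable_LIMSEQ_real[OF _ mu])
    fix z
    show "(\<lambda>k. u k z) \<longlonglongrightarrow> deriv (deriv f) (q z)"
      by (cases "z = p") (simp_all add: u_def conv)
  qed
qed

lemma main_lborel:
  fixes a b c :: real and f q :: "real \<Rightarrow> real"
  assumes hq: "q = (\<lambda>x. a * x\<^sup>2 + b * x + c)" and ab: "a \<noteq> 0 \<or> b \<noteq> 0"
    and tw: "twice_differentiable_on f (interior (range q))"
    and i0: "integrable lborel (\<lambda>z. phi z * f (q z))"
    and i1: "integrable lborel (\<lambda>z. phi z * deriv f (q z))"
    and i2: "integrable lborel (\<lambda>z. phi z * deriv (deriv f) (q z))"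
    and iq0: "integrable lborel (\<lambda>z. phi z * (q z * f (q z)))"
    and iq1: "integrable lborel (\<lambda>z. phi z * (q z * deriv f (q z)))"
    and iq2: "integrable lborel (\<lambda>z. phi z * (q z * deriv (deriv f) (q z)))"
  shows "(\<integral>z. phi z * ((a * b\<^sup>2 + 4 * a\<^sup>2 * (q z - c)) * deriv (deriv f) (q z)
          + (2 * a\<^sup>2 - b\<^sup>2 - 4 * a * (q z - c)) * deriv f (q z)
          + (q z - c - a) * f (q z)) \<partial>lborel) = 0"
proof -
  define p where "p = (if a = 0 then 0 else -b/(2*a))"
  have inU: "q z \<in> interior (range q)" if "z \<noteq> p \<or> a = 0" for z
  proof (cases "a = 0")
    case True then show ?thesis by (rule geom(2)[OF hq ab])
  next
    case False
    then have "z \<noteq> (if a = 0 then 0 else -b/(2*a))" using that by (simp add: p_def)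
    then show ?thesis by (rule geom(1)[OF hq ab])
  qed
  have df: "(f has_real_derivative deriv f y) (at y)" if "y \<in> interior (range q)" for y
    using tw that unfolding twice_differentiable_on_def by (simp add: DERIV_deriv_iff_real_differentiable)
  have ddf: "(deriv f has_real_derivative deriv (deriv f) y) (at y)" if "y \<in> interior (range q)" for y
    using tw that unfolding twice_differentiable_on_def by (simp add: DERIV_deriv_iff_real_differentiable)
  have dq: "(q has_real_derivative 2*a*z + b) (at z)" for z unfolding hq by (auto intro!: derivative_eq_intros)
  have dl: "((\<lambda>z. 2*a*z + b) has_real_derivative 2*a) (at z)" for z by (auto intro!: derivative_eq_intros)
  have qsym: "q (2*p - z) = q z" if "a \<noteq> 0" for z
    using that by (simp add: hq p_def field_simps power2_eq_square)
  have lin: "2*a*z + b = 2*a*(z - p)" if "a \<noteq> 0" for z using that by (simp add: p_def field_simps)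
  have m0: "(\<lambda>z. f (q z)) \<in> borel_measurable borel" by (rule meas_F(1)[OF hq ab tw])
  have m1: "(\<lambda>z. deriv f (q z)) \<in> borel_measurable borel" by (rule meas_F(2)[OF hq ab tw])
  have iz: "integrable lborel (\<lambda>z. phi z * (z * G (q z)))"
    if mG: "(\<lambda>z. G (q z)) \<in> borel_measurable borel" and iG: "integrable lborel (\<lambda>z. phi z * G (q z))"
       and iqG: "integrable lborel (\<lambda>z. phi z * (q z * G (q z)))" for G
  proof (cases "a = 0")
    case True
    then have b: "b \<noteq> 0" using ab by simp
    have "(\<lambda>z. phi z * (z * G (q z))) = (\<lambda>z. (phi z * (q z * G (q z)) - c * (phi z * G (q z))) / b)"
      using True b by (auto simp: hq fun_eq_iff field_simps)
    moreover have "integrable lborel (\<lambda>z. (phi z * (q z * G (q z)) - c * (phi z * G (q z))) / b)"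
      by (intro integrable_divide Bochner_Integration.integrable_diff integrable_mult_right iG iqG)
    ultimately show ?thesis by simp
  next
    case False
    define K where "K = (1 + 2 * \<bar>c\<bar> / \<bar>a\<bar> + b\<^sup>2 / \<bar>a\<bar>\<^sup>2 + 2 / \<bar>a\<bar>)"
    have K0: "K \<ge> 0" by (simp add: K_def)
    show ?thesis
    proof (rule Bochner_Integration.integrable_bound)
      show "integrable lborel (\<lambda>z. K * (\<bar>phi z * G (q z)\<bar> + \<bar>phi z * (q z * G (q z))\<bar>))"
        by (intro integrable_mult_right Bochner_Integration.integrable_add integrable_abs iG iqG)
      show "(\<lambda>z. phi z * (z * G (q z))) \<in> borel_measurable lborel"
        unfolding measurable_lborel2
        by (intro borel_measurable_times borel_measurable_normal_density measurable_ident_sets[OF refl] mG)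
      show "AE z in lborel. norm (phi z * (z * G (q z))) \<le> norm (K * (\<bar>phi z * G (q z)\<bar> + \<bar>phi z * (q z * G (q z))\<bar>))"
      proof (rule AE_I2)
        fix z
        have zb: "\<bar>z\<bar> \<le> K * (1 + \<bar>q z\<bar>)" using zbound[OF False, where z=z and b=b and c=c] by (simp add: K_def hq)
        have pg: "phi z * \<bar>G (q z)\<bar> \<ge> 0" by simp
        have "norm (phi z * (z * G (q z))) = \<bar>z\<bar> * (phi z * \<bar>G (q z)\<bar>)" by (simp add: abs_mult)
        also have "\<dots> \<le> K * (1 + \<bar>q z\<bar>) * (phi z * \<bar>G (q z)\<bar>)" by (rule mult_right_mono[OF zb pg])
        also have "\<dots> = K * (\<bar>phi z * G (q z)\<bar> + \<bar>phi z * (q z * G (q z))\<bar>)"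
          by (simp add: abs_mult algebra_simps)
        also have "\<dots> = norm (K * (\<bar>phi z * G (q z)\<bar> + \<bar>phi z * (q z * G (q z))\<bar>))"
          using K0 by simp
        finally show "norm (phi z * (z * G (q z))) \<le> norm (K * (\<bar>phi z * G (q z)\<bar> + \<bar>phi z * (q z * G (q z))\<bar>))" .
      qed
    qed
  qed
  have iz0: "integrable lborel (\<lambda>z. phi z * (z * f (q z)))" by (rule iz[OF m0 i0 iq0])
  have iz1: "integrable lborel (\<lambda>z. phi z * (z * deriv f (q z)))" by (rule iz[OF m1 i1 iq1])
  have odd: "integrable lborel (\<lambda>z. phi z * (z * ((2*a*z+b) * G (q z))) - phi z * (2*a*G (q z) + (2*a*z+b)*(G' (q z)*(2*a*z+b))))
      \<and> (\<integral>z. phi z * (z * ((2*a*z+b) * G (q z))) - phi z * (2*a*G (q z) + (2*a*z+b)*(G' (q z)*(2*a*z+b))) \<partial>lborel) = 0"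
    if dG: "\<And>y. y \<in> interior (range q) \<Longrightarrow> (G has_real_derivative G' y) (at y)"
      and iG: "integrable lborel (\<lambda>z. phi z * G (q z))"
      and iqG: "integrable lborel (\<lambda>z. phi z * (q z * G (q z)))"
      and izG: "integrable lborel (\<lambda>z. phi z * (z * G (q z)))"
      and iG': "integrable lborel (\<lambda>z. phi z * G' (q z))"
      and iqG': "integrable lborel (\<lambda>z. phi z * (q z * G' (q z)))" for G G'
  proof -
    define h where "h z = (2*a*z+b) * G (q z)" for z
    define h' where "h' z = 2*a*G (q z) + (2*a*z+b)*(G' (q z)*(2*a*z+b))" for z
    have der: "(h has_real_derivative h' z) (at z)" if "z \<noteq> p \<or> a = 0" for z
      unfolding h_def[abs_def] h'_def
      by (rule DERIV_cong[OF DERIV_mult[OF dl DERIV_chain2[OF dG[OF inU[OF that]] dq]]]) (simp add: algebra_simps)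
    have e1: "(\<lambda>z. phi z * h z) = (\<lambda>z. 2*a*(phi z * (z * G (q z))) + b * (phi z * G (q z)))"
      by (auto simp: h_def fun_eq_iff algebra_simps)
    have ih: "integrable lborel (\<lambda>z. phi z * h z)" unfolding e1
      by (intro Bochner_Integration.integrable_add integrable_mult_right izG iG)
    have e2: "(\<lambda>z. phi z * (z * h z)) = (\<lambda>z. 2*(phi z*(q z*G(q z))) - 2*c*(phi z*G(q z)) - b*(phi z*(z*G(q z))))"
      by (auto simp: h_def hq fun_eq_iff algebra_simps power2_eq_square)
    have izh: "integrable lborel (\<lambda>z. phi z * (z * h z))" unfolding e2
      by (intro Bochner_Integration.integrable_diff integrable_mult_right izG iG iqG)
    have e3: "(\<lambda>z. phi z * h' z) = (\<lambda>z. 2*a*(phi z*G(q z)) + 4*a*(phi z*(q z*G'(q z))) + (b\<^sup>2 - 4*a*c)*(phi z*G'(q z)))"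
      by (auto simp: h'_def hq fun_eq_iff algebra_simps power2_eq_square)
    have ih': "integrable lborel (\<lambda>z. phi z * h' z)" unfolding e3
      by (intro Bochner_Integration.integrable_add integrable_mult_right iG iG' iqG')
    have st: "(\<integral>z. phi z * (z * h z) \<partial>lborel) = (\<integral>z. phi z * h' z \<partial>lborel)"
    proof (rule stein_gen[of p h h'])
      show "(h has_real_derivative h' z) (at z)" if "z \<noteq> p" for z using der that by blast
      show "L1 = L2" if L1: "(h \<longlongrightarrow> L1) (at_left p)" and L2: "(h \<longlongrightarrow> L2) (at_right p)" for L1 L2
      proof (cases "a = 0")
        case True
        show ?thesis by (rule bd_cont[OF DERIV_isCont[OF der] L1 L2]) (simp add: True)
      next
        case False
        show ?thesis
        proof (rule bd_odd[of h p "\<lambda>z. 2*a*G (q z)", OF _ _ _ L1 L2])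
          show "h z = (z - p) * (2*a*G (q z))" for z using lin[OF False, of z] by (simp add: h_def)
          show "2*a*G (q (2*p - z)) = 2*a*G (q z)" for z using qsym[OF False] by simp
          show "integrable lborel (\<lambda>z. phi z * (2*a*G (q z)))"
            using integrable_mult_right[OF iG, of "2*a"] by (simp add: algebra_simps)
        qed
      qed
    qed (use ih izh ih' in auto)
    have "integrable lborel (\<lambda>z. phi z * (z * h z) - phi z * h' z)
      \<and> (\<integral>z. phi z * (z * h z) - phi z * h' z \<partial>lborel) = 0"
      using izh ih' st by simp
    then show ?thesis by (simp add: h_def h'_def)
  qed
  have even: "integrable lborel (\<lambda>z. phi z * (z * G (q z)) - phi z * (G' (q z) * (2*a*z+b)))
      \<and> (\<integral>z. phi z * (z * G (q z)) - phi z * (G' (q z) * (2*a*z+b)) \<partial>lborel) = 0"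
    if dG: "\<And>y. y \<in> interior (range q) \<Longrightarrow> (G has_real_derivative G' y) (at y)"
      and iG: "integrable lborel (\<lambda>z. phi z * G (q z))"
      and izG: "integrable lborel (\<lambda>z. phi z * (z * G (q z)))"
      and iG': "integrable lborel (\<lambda>z. phi z * G' (q z))"
      and izG': "integrable lborel (\<lambda>z. phi z * (z * G' (q z)))" for G G'
  proof -
    define h where "h z = G (q z)" for z
    define h' where "h' z = G' (q z) * (2*a*z+b)" for z
    have der: "(h has_real_derivative h' z) (at z)" if "z \<noteq> p \<or> a = 0" for z
      unfolding h_def[abs_def] h'_def
      by (rule DERIV_chain2[OF dG[OF inU[OF that]] dq])
    have ih: "integrable lborel (\<lambda>z. phi z * h z)" using iG by (simp add: h_def)
    have izh: "integrable lborel (\<lambda>z. phi z * (z * h z))" using izG by (simp add: h_def)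
    have e3: "(\<lambda>z. phi z * h' z) = (\<lambda>z. 2*a*(phi z*(z*G'(q z))) + b*(phi z*G'(q z)))"
      by (auto simp: h'_def fun_eq_iff algebra_simps)
    have ih': "integrable lborel (\<lambda>z. phi z * h' z)" unfolding e3
      by (intro Bochner_Integration.integrable_add integrable_mult_right iG' izG')
    have st: "(\<integral>z. phi z * (z * h z) \<partial>lborel) = (\<integral>z. phi z * h' z \<partial>lborel)"
    proof (rule stein_gen[of p h h'])
      show "(h has_real_derivative h' z) (at z)" if "z \<noteq> p" for z using der that by blast
      show "L1 = L2" if L1: "(h \<longlongrightarrow> L1) (at_left p)" and L2: "(h \<longlongrightarrow> L2) (at_right p)" for L1 L2
      proof (cases "a = 0")
        case True
        show ?thesis by (rule bd_cont[OF DERIV_isCont[OF der] L1 L2]) (simp add: True)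
      next
        case False
        show ?thesis
          by (rule bd_even[OF _ L1 L2]) (simp add: h_def qsym[OF False])
      qed
    qed (use ih izh ih' in auto)
    have "integrable lborel (\<lambda>z. phi z * (z * h z) - phi z * h' z)
      \<and> (\<integral>z. phi z * (z * h z) - phi z * h' z \<partial>lborel) = 0"
      using izh ih' st by simp
    then show ?thesis by (simp add: h_def h'_def)
  qed
  note o1 = odd[of f "deriv f", OF df i0 iq0 iz0 i1 iq1]
  note e2 = even[of f "deriv f", OF df i0 iz0 i1 iz1]
  note o3 = odd[of "deriv f" "deriv (deriv f)", OF ddf i1 iq1 iz1 i2 iq2]
  define D1 where "D1 z = phi z * (z * ((2*a*z+b) * f (q z))) - phi z * (2*a*f (q z) + (2*a*z+b)*(deriv f (q z)*(2*a*z+b)))" for z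
  define D2 where "D2 z = phi z * (z * f (q z)) - phi z * (deriv f (q z) * (2*a*z+b))" for z
  define D3 where "D3 z = phi z * (z * ((2*a*z+b) * deriv f (q z))) - phi z * (2*a*deriv f (q z) + (2*a*z+b)*(deriv (deriv f) (q z)*(2*a*z+b)))" for z
  have I1: "integrable lborel D1" "integral\<^sup>L lborel D1 = 0" using o1 by (simp_all add: D1_def[abs_def])
  have I2: "integrable lborel D2" "integral\<^sup>L lborel D2 = 0" using e2 by (simp_all add: D2_def[abs_def])
  have I3: "integrable lborel D3" "integral\<^sup>L lborel D3 = 0" using o3 by (simp_all add: D3_def[abs_def])
  have eq: "(\<lambda>z. phi z * ((a * b\<^sup>2 + 4 * a\<^sup>2 * (q z - c)) * deriv (deriv f) (q z)
          + (2 * a\<^sup>2 - b\<^sup>2 - 4 * a * (q z - c)) * deriv f (q z)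
          + (q z - c - a) * f (q z))) = (\<lambda>z. (D1 z + b * D2 z - 2 * a * D3 z) / 2)"
    by (rule ext) (simp add: D1_def D2_def D3_def hq algebra_simps power2_eq_square)
  have "(\<integral>z. (D1 z + b * D2 z - 2 * a * D3 z) / 2 \<partial>lborel) = (integral\<^sup>L lborel D1 + b * integral\<^sup>L lborel D2 - 2 * a * integral\<^sup>L lborel D3) / 2"
    using I1 I2 I3 by (simp add: Bochner_Integration.integral_add Bochner_Integration.integral_diff)
  then show ?thesis unfolding eq using I1 I2 I3 by simp
qed

theorem proposition2p1:
  fixes M :: "'s measure" and Z :: "'s \<Rightarrow> real" and a b c :: real and f :: "real \<Rightarrow> real"
  assumes "prob_space M"
    and "distributed M lborel Z std_normal_density"
    and "twice_differentiable_on f (interior (range (\<lambda>x::real. a * x\<^sup>2 + b * x + c)))"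
    and "\<And>k. k \<le> 2 \<Longrightarrow>
           integrable M (\<lambda>\<omega>. (a * (Z \<omega>)\<^sup>2 + b * Z \<omega> + c) * (deriv ^^ k) f (a * (Z \<omega>)\<^sup>2 + b * Z \<omega> + c))"
    and "\<And>k. k \<le> 2 \<Longrightarrow>
           integrable M (\<lambda>\<omega>. (deriv ^^ k) f (a * (Z \<omega>)\<^sup>2 + b * Z \<omega> + c))"
  shows "(\<integral>\<omega>. (let X = a * (Z \<omega>)\<^sup>2 + b * Z \<omega> + c in
            (a * b\<^sup>2 + 4 * a\<^sup>2 * (X - c)) * (deriv ^^ 2) f X
          + (2 * a\<^sup>2 - b\<^sup>2 - 4 * a * (X - c)) * deriv f X
          + (X - c - a) * f X) \<partial>M) = 0"
proof (cases "a = 0 \<and> b = 0")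
  case True
  then show ?thesis by (simp add: Let_def)
next
  case False
  then have ab: "a \<noteq> 0 \<or> b \<noteq> 0" by simp
  define q where "q = (\<lambda>x::real. a * x\<^sup>2 + b * x + c)"
  have tw: "twice_differentiable_on f (interior (range q))" using assms(3) by (simp add: q_def)
  have dd: "(deriv^^0) f = f" "(deriv^^1) f = deriv f" "(deriv^^2) f = deriv (deriv f)"
    by (simp_all add: numeral_2_eq_2)
  note mF = meas_F[OF q_def ab tw]
  have mq: "q \<in> borel_measurable borel" unfolding q_def by measurable
  have dist: "distributed M lborel Z (\<lambda>x. ennreal (phi x))" using assms(2) .
  have tr: "integrable lborel (\<lambda>x. phi x * G x)" if "G \<in> borel_measurable borel" "integrable M (\<lambda>x. G (Z x))" for G
    using distributed_integrable[OF dist, of G] that by simp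
  have mqF: "(\<lambda>z. q z * G (q z)) \<in> borel_measurable borel" if "(\<lambda>z. G (q z)) \<in> borel_measurable borel" for G
    by (intro borel_measurable_times mq that)
  have i0: "integrable lborel (\<lambda>z. phi z * f (q z))"
    by (rule tr[OF mF(1)]) (use assms(5)[of 0] in \<open>simp add: q_def\<close>)
  have i1: "integrable lborel (\<lambda>z. phi z * deriv f (q z))"
    by (rule tr[OF mF(2)]) (use assms(5)[of 1] in \<open>simp add: q_def\<close>)
  have i2: "integrable lborel (\<lambda>z. phi z * deriv (deriv f) (q z))"
    by (rule tr[OF mF(3)]) (use assms(5)[of 2] in \<open>simp add: q_def dd\<close>)
  have iq0: "integrable lborel (\<lambda>z. phi z * (q z * f (q z)))"
    by (rule tr[OF mqF[OF mF(1)]]) (use assms(4)[of 0] in \<open>simp add: q_def\<close>)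
  have iq1: "integrable lborel (\<lambda>z. phi z * (q z * deriv f (q z)))"
    by (rule tr[OF mqF[OF mF(2)]]) (use assms(4)[of 1] in \<open>simp add: q_def\<close>)
  have iq2: "integrable lborel (\<lambda>z. phi z * (q z * deriv (deriv f) (q z)))"
    by (rule tr[OF mqF[OF mF(3)]]) (use assms(4)[of 2] in \<open>simp add: q_def dd\<close>)
  define g where "g z = (let X = a * z\<^sup>2 + b * z + c in
            (a * b\<^sup>2 + 4 * a\<^sup>2 * (X - c)) * (deriv ^^ 2) f X
          + (2 * a\<^sup>2 - b\<^sup>2 - 4 * a * (X - c)) * deriv f X
          + (X - c - a) * f X)" for z
  have g': "g = (\<lambda>z. (a * b\<^sup>2 + 4 * a\<^sup>2 * (q z - c)) * deriv (deriv f) (q z)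
          + (2 * a\<^sup>2 - b\<^sup>2 - 4 * a * (q z - c)) * deriv f (q z)
          + (q z - c - a) * f (q z))"
    by (simp add: g_def[abs_def] q_def dd Let_def)
  have mg: "g \<in> borel_measurable borel" unfolding g'
    by (intro borel_measurable_add borel_measurable_times borel_measurable_diff borel_measurable_const mq mF)
  have "(\<integral>\<omega>. g (Z \<omega>) \<partial>M) = (\<integral>z. phi z * g z \<partial>lborel)"
    using distributed_integral[OF dist, of g] mg by simp
  also have "\<dots> = 0" unfolding g' by (rule main_lborel[OF q_def ab tw i0 i1 i2 iq0 iq1 iq2])
  finally show ?thesis unfolding g_def .
qed

end
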